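(* Let $d\ge 2$, let $s$ be a zero-mean complex random variable (possibly non-circular and non-Gaussian) with density $p_s$ satisfying standard regularity conditions, and let ${\bf z}$ be a zero-mean circular complex Gaussian random vector of dimension $d-1$ with nonsingular covariance ${\bf C}_{\bf z}={\rm E}[{\bf z}{\bf z}^H]$, independent of $s$. Consider $N$ i.i.d. observations of ${\bf x}={\bf A}{\bf v}$, ${\bf v}=[s;{\bf z}]$, where $$ {\bf A}=\begin{pmatrix}1 & {\bf h}^H\\ {\bf g} & {\bf g}{\bf h}^H-{\bf I}_{d-1}\end{pmatrix},\qquad {\bf A}^{-1}=\begin{pmatrix}{\bf w}^H\\ {\bf B}\end{pmatrix}=\begin{pmatrix}1-{\bf h}^H{\bf g} & {\bf h}^H\\ {\bf g} & -{\bf I}_{d-1}\end{pmatrix}, $$ with unknown parameters ${\bf h},{\bf g}\in\mathbb{C}^{d-1}$ and per-sample log-likelihood $\log p_s({\bf w}^H{\bf x})+\log p_{\bf z}({\bf B}{\bf x})$. Assume the true value has ${\bf h}={\bf 0}$ (${\bf g}$ arbitrary) and $\overline{\kappa}_s:=\sigma_s^2\kappa_s>1$. Then the Cramér–Rao lower bound for ${\bf h}$ (the ${\bf h}$-block of the inverse of the complex Fisher information matrix of the $N$ samples) is $$ \mathtt{CRLB}({\bf h})=\frac{1}{N}\,\frac{\sigma_s^2}{\kappa_s\sigma_s^2-1}\,{\bf C}_{\bf z}^{-1}, $$ and consequently $$ \frac{1}{\sigma_s^2}\,\mathrm{tr}\bigl({\bf C}_{\bf z}\,\mathtt{CRLB}({\bf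 h})\bigr)=\frac{1}{N}\,\frac{d-1}{\overline{\kappa}_s-1}. $$
   Context: Derivatives are Wirtinger derivatives. $\psi_s(s)=-\partial \ln p_s(s,s^* )/\partial s^*$, $\kappa_s={\rm E}[|\psi_s(s)|^2]$, $\sigma_s^2={\rm E}[|s|^2]$. A random vector ${\bf z}$ is circular if ${\rm E}[{\bf z}{\bf z}^T]={\bf 0}$. The per-sample complex Fisher information matrix of $\boldsymbol\theta=[{\bf h};{\bf g}]$ is $\mathcal{J}=\begin{pmatrix}{\bf F}&{\bf P}\\{\bf P}^*&{\bf F}^*\end{pmatrix}$ with ${\bf F}={\rm E}[\frac{\partial\mathcal{L}}{\partial\boldsymbol\theta^*}(\frac{\partial\mathcal{L}}{\partial\boldsymbol\theta^*})^H]$, ${\bf P}={\rm E}[\frac{\partial\mathcal{L}}{\partial\boldsymbol\theta^*}(\frac{\partial\mathcal{L}}{\partial\boldsymbol\theta^*})^T]$, $\mathcal{L}$ the per-sample log-likelihood; for $N$ i.i.d. samples the information is $N\mathcal{J}$. The quantity $\frac{1}{\sigma_s^2}\mathrm{tr}({\bf C}_{\bf z}\mathtt{CRLB}({\bf h}))$ is the Cramér–Rao-induced bound on the mean interference-to-signal ratio of the extracted signal. *)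

theory Defs
  imports "HOL-Probability.Probability"
begin

text \<open>Wirtinger derivative with respect to the conjugate variable:
  for f : C -> C real-differentiable at z with real-linear derivative D,
  df/dz* = (1/2)(df/dx + i df/dy) = (D 1 + i D i)/2.\<close>
definition wirt_conj :: "(complex \<Rightarrow> complex) \<Rightarrow> complex \<Rightarrow> complex" where
  "wirt_conj f z =
     (frechet_derivative f (at z) 1 + \<i> * frechet_derivative f (at z) \<i>) / 2"

definition wgrad :: "(complex^'m \<Rightarrow> real) \<Rightarrow> complex^'m \<Rightarrow> complex^'m" where
  "wgrad f t = (\<chi> k. wirt_conj
       (\<lambda>c. complex_of_real (f (\<chi> j. if j = k then c else t $ j))) (t $ k))"

definition hdot :: "complex^'n \<Rightarrow> complex^'n \<Rightarrow> complex" where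
  "hdot h v = (\<Sum>k\<in>UNIV. cnj (h $ k) * v $ k)"

definition psi :: "(complex \<Rightarrow> real) \<Rightarrow> complex \<Rightarrow> complex" where
  "psi ps u = - wirt_conj (\<lambda>u. complex_of_real (ln (ps u))) u"

definition herm_pd :: "complex^'n^'n \<Rightarrow> bool" where
  "herm_pd C \<longleftrightarrow> (\<forall>i j. C $ i $ j = cnj (C $ j $ i)) \<and>
     (\<forall>v. v \<noteq> 0 \<longrightarrow> Re (\<Sum>i\<in>UNIV. \<Sum>j\<in>UNIV. cnj (v $ i) * C $ i $ j * v $ j) > 0)"

text \<open>Density (w.r.t. Lebesgue measure on C^n = R^{2n}) of a zero-mean circular
  complex Gaussian vector with nonsingular covariance C.\<close>
definition cgauss_pdf :: "complex^'n^'n \<Rightarrow> complex^'n \<Rightarrow> real" where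
  "cgauss_pdf C y = exp (- Re (\<Sum>i\<in>UNIV. \<Sum>j\<in>UNIV. cnj (y $ i) * matrix_inv C $ i $ j * y $ j))
                    / (pi ^ CARD('n) * Re (det C))"

definition hpart :: "complex^('n + 'n) \<Rightarrow> complex^'n" where
  "hpart t = (\<chi> k. t $ Inl k)"
definition gpart :: "complex^('n + 'n) \<Rightarrow> complex^'n" where
  "gpart t = (\<chi> k. t $ Inr k)"
definition theta :: "complex^'n \<Rightarrow> complex^'n \<Rightarrow> complex^('n + 'n)" where
  "theta h g = (\<chi> k. case k of Inl i \<Rightarrow> h $ i | Inr i \<Rightarrow> g $ i)"

text \<open>Mixing x = A v with v = [s; z], A = [[1, h^H],[g, g h^H - I]].
  Observations are pairs (x_1, x_rest) in C x C^(d-1).\<close>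
definition mixA :: "complex^'n \<Rightarrow> complex^'n \<Rightarrow> complex \<Rightarrow> complex^'n \<Rightarrow> complex \<times> (complex^'n)" where
  "mixA h g s z = (s + hdot h z, s *s g + (hdot h z) *s g - z)"

text \<open>Per-sample log-likelihood  log p_s(w^H x) + log p_z(B x), with
  A^{-1} = [[1 - h^H g, h^H],[g, -I]].\<close>
definition loglik :: "(complex \<Rightarrow> real) \<Rightarrow> (complex^'n \<Rightarrow> real) \<Rightarrow> complex^('n+'n)
                      \<Rightarrow> complex \<times> (complex^'n) \<Rightarrow> real" where
  "loglik ps pz t x =
     (let h = hpart t; g = gpart t; x0 = fst x; x' = snd x in
        ln (ps ((1 - hdot h g) * x0 + hdot h x')) + ln (pz (x0 *s g - x')))"

definition fisherF :: "'a measure \<Rightarrow> (complex \<Rightarrow> real) \<Rightarrow> (complex^'n \<Rightarrow> real)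
     \<Rightarrow> complex^('n+'n) \<Rightarrow> ('a \<Rightarrow> complex \<times> (complex^'n)) \<Rightarrow> complex^('n+'n)^('n+'n)" where
  "fisherF M ps pz t0 X = (\<chi> i j. integral\<^sup>L M (\<lambda>\<omega>.
      wgrad (\<lambda>t. loglik ps pz t (X \<omega>)) t0 $ i * cnj (wgrad (\<lambda>t. loglik ps pz t (X \<omega>)) t0 $ j)))"

definition fisherP :: "'a measure \<Rightarrow> (complex \<Rightarrow> real) \<Rightarrow> (complex^'n \<Rightarrow> real)
     \<Rightarrow> complex^('n+'n) \<Rightarrow> ('a \<Rightarrow> complex \<times> (complex^'n)) \<Rightarrow> complex^('n+'n)^('n+'n)" where
  "fisherP M ps pz t0 X = (\<chi> i j. integral\<^sup>L M (\<lambda>\<omega>.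
      wgrad (\<lambda>t. loglik ps pz t (X \<omega>)) t0 $ i * wgrad (\<lambda>t. loglik ps pz t (X \<omega>)) t0 $ j))"

definition cfim :: "'m::finite itself \<Rightarrow> complex^'m^'m \<Rightarrow> complex^'m^'m \<Rightarrow> complex^('m+'m)^('m+'m)" where
  "cfim _ F P = (\<chi> a b. case (a, b) of
       (Inl i, Inl j) \<Rightarrow> F $ i $ j
     | (Inl i, Inr j) \<Rightarrow> P $ i $ j
     | (Inr i, Inl j) \<Rightarrow> cnj (P $ i $ j)
     | (Inr i, Inr j) \<Rightarrow> cnj (F $ i $ j))"

definition crlb_h :: "nat \<Rightarrow> complex^(('n+'n)+('n+'n))^(('n+'n)+('n+'n)) \<Rightarrow> complex^'n^'n" where
  "crlb_h N J = (\<chi> i j. matrix_inv (\<chi> a b. of_nat N * J $ a $ b) $ Inl (Inl i) $ Inl (Inl j))"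

end

theory Submission
  imports Defs
begin


lemma wirt_conj_eq:
  assumes "(f has_derivative D) (at z)"
  shows "wirt_conj f z = (D 1 + \<i> * D \<i>)/2"
  using frechet_derivative_at[OF assms] unfolding wirt_conj_def by simp

lemma real_lin_decomp:
  assumes "bounded_linear (D :: complex \<Rightarrow> real)"
  shows "D w = Re w * D 1 + Im w * D \<i>"
proof -
  interpret bounded_linear D by fact
  have "w = Re w *\<^sub>R 1 + Im w *\<^sub>R \<i>" by (simp add: complex_eq_iff)
  then have "D w = D (Re w *\<^sub>R 1 + Im w *\<^sub>R \<i>)" by simp
  also have "\<dots> = Re w * D 1 + Im w * D \<i>"
    by (simp add: add scaleR)
  finally show ?thesis .
qed

lemma ps_facts:
  fixes ps :: "complex \<Rightarrow> real"
  assumes pos: "ps u > 0" and dif: "ps differentiable (at u)"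
  defines "D \<equiv> frechet_derivative ps (at u)"
  shows "(ps has_derivative D) (at u)" "bounded_linear D"
    "psi ps u = -(of_real (D 1) + \<i> * of_real (D \<i>)) / (2 * of_real (ps u))"
    "wirt_conj (\<lambda>u. complex_of_real (ps u) * cnj u) u
        = of_real (ps u) - of_real (ps u) * cnj u * psi ps u"
proof -
  show hD: "(ps has_derivative D) (at u)" using dif unfolding D_def frechet_derivative_works .
  then show bl: "bounded_linear D" by (rule has_derivative_bounded_linear)
  have "((\<lambda>u. complex_of_real (ln (ps u))) has_derivative (\<lambda>h. of_real (D h * inverse (ps u)))) (at u)"
    by (intro has_derivative_of_real has_derivative_ln pos hD)
  from wirt_conj_eq[OF this]
  show ps1: "psi ps u = -(of_real (D 1) + \<i> * of_real (D \<i>)) / (2 * of_real (ps u))"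
    unfolding psi_def using pos by (simp add: field_simps)
  have "((\<lambda>u. complex_of_real (ps u) * cnj u) has_derivative
          (\<lambda>h. of_real (ps u) * cnj h + of_real (D h) * cnj u)) (at u)"
    by (rule has_derivative_eq_rhs, (rule derivative_intros hD)+, simp add: algebra_simps)
  note W = wirt_conj_eq[OF this]
  show "wirt_conj (\<lambda>u. complex_of_real (ps u) * cnj u) u
        = of_real (ps u) - of_real (ps u) * cnj u * psi ps u"
    unfolding W ps1 using pos by (simp add: field_simps complex_eq_iff)
qed



lemma hdot_zero[simp]: "hdot 0 v = 0"
  by (simp add: hdot_def)

lemma hdot_single: "hdot (\<chi> m. if m = k then c else 0) v = cnj c * v $ k"
proof -
  have e: "(\<lambda>ka. cnj (if ka = k then c else 0) * v $ ka) = (\<lambda>ka. if ka = k then cnj c * v $ k else 0)"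
    by auto
  show ?thesis unfolding hdot_def vec_lambda_beta e by simp
qed

lemma mixA_0: "mixA 0 g0 s0 z0 = (s0, s0 *s g0 - z0)"
  by (simp add: mixA_def)

lemma score_h:
  fixes ps :: "complex \<Rightarrow> real" and pz :: "complex^'n \<Rightarrow> real"
  assumes pos: "\<forall>u. ps u > 0" and dif: "\<forall>u. ps differentiable (at u)"
  shows "wgrad (\<lambda>t. loglik ps pz t (mixA 0 g0 s0 z0)) (theta 0 g0) $ Inl k = cnj (psi ps s0) * z0 $ k"
proof -
  define zk where "zk = z0 $ k"
  have fe: "(\<lambda>c. complex_of_real (loglik ps pz (\<chi> j. if j = Inl k then c else theta 0 g0 $ j) (mixA 0 g0 s0 z0)))
     = (\<lambda>c. complex_of_real (ln (ps (s0 - cnj c * zk)) + ln (pz z0)))"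
  proof
    fix c
    have hp: "hpart (\<chi> j. if j = Inl k then c else theta 0 g0 $ j) = (\<chi> m. if m = k then c else 0)"
      by (simp add: hpart_def theta_def vec_eq_iff)
    have gp: "gpart (\<chi> j. if j = Inl k then c else theta 0 g0 $ j) = g0"
      by (simp add: gpart_def theta_def vec_eq_iff)
    have a1: "(1 - cnj c * g0 $ k) * s0 + cnj c * (s0 * g0 $ k - z0 $ k) = s0 - cnj c * zk"
      by (simp add: zk_def algebra_simps)
    have a2: "s0 *s g0 - (s0 *s g0 - z0) = z0" by simp
    show "complex_of_real (loglik ps pz (\<chi> j. if j = Inl k then c else theta 0 g0 $ j) (mixA 0 g0 s0 z0))
       = complex_of_real (ln (ps (s0 - cnj c * zk)) + ln (pz z0))"
      unfolding loglik_def Let_def hp gp mixA_0 hdot_single fst_conv snd_conv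
      using a1 a2 by simp
  qed
  define D where "D = frechet_derivative ps (at s0)"
  note F = ps_facts[OF pos[rule_format] dif[rule_format], of s0, folded D_def]
  have "((\<lambda>c. s0 - cnj c * zk) has_derivative (\<lambda>h. - (cnj h * zk))) (at 0)"
    by (rule has_derivative_eq_rhs, (rule derivative_intros)+, simp)
  moreover have "(ps has_derivative D) (at (s0 - cnj 0 * zk))" using F(1) by simp
  ultimately have "((\<lambda>c. ps (s0 - cnj c * zk)) has_derivative (\<lambda>h. D (- (cnj h * zk)))) (at 0)"
    by (rule has_derivative_compose)
  then have "((\<lambda>c. ln (ps (s0 - cnj c * zk))) has_derivative (\<lambda>h. D (- (cnj h * zk)) * inverse (ps (s0 - cnj 0 * zk)))) (at 0)"
    using pos by (intro has_derivative_ln) auto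
  then have "((\<lambda>c. complex_of_real (ln (ps (s0 - cnj c * zk)) + ln (pz z0))) has_derivative
        (\<lambda>h. complex_of_real (D (- (cnj h * zk)) * inverse (ps s0) + 0))) (at 0)"
    by (intro has_derivative_of_real has_derivative_add has_derivative_const) auto
  note W = wirt_conj_eq[OF this]
  have t0: "theta 0 g0 $ Inl k = 0" by (simp add: theta_def)
  have d1: "D (- zk) = Re (-zk) * D 1 + Im (-zk) * D \<i>" by (rule real_lin_decomp[OF F(2)])
  have d2: "D (\<i> * zk) = Re (\<i> * zk) * D 1 + Im (\<i> * zk) * D \<i>" by (rule real_lin_decomp[OF F(2)])
  show ?thesis
    unfolding wgrad_def vec_lambda_beta fe t0 W F(3) zk_def[symmetric]
    using pos[rule_format, of s0] d1 d2
    by (simp add: field_simps complex_eq_iff)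
qed



definition qf :: "complex^'n^'n \<Rightarrow> complex^'n \<Rightarrow> complex" where
  "qf Q y = (\<Sum>i\<in>UNIV. \<Sum>j\<in>UNIV. cnj (y $ i) * Q $ i $ j * y $ j)"

lemma ln_cgauss:
  assumes K: "pi ^ CARD('n) * Re (det C) > 0"
  shows "ln (cgauss_pdf C (y::complex^'n)) = - Re (qf (matrix_inv C) y) - ln (pi ^ CARD('n) * Re (det C))"
proof -
  have "Re (det C) \<noteq> 0" using K by auto
  then show ?thesis unfolding cgauss_pdf_def qf_def by (simp add: ln_div)
qed

lemma score_g:
  fixes ps :: "complex \<Rightarrow> real" and C :: "complex^'n^'n"
  assumes pos: "\<forall>u. ps u > 0"
    and K: "pi ^ CARD('n) * Re (det C) > 0"
    and herm: "\<forall>i j. matrix_inv C $ i $ j = cnj (matrix_inv C $ j $ i)"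
  shows "wgrad (\<lambda>t. loglik ps (cgauss_pdf C) t (mixA 0 g0 s0 z0)) (theta 0 g0) $ Inr k
     = - cnj s0 * (matrix_inv C *v z0) $ k"
proof -
  define Q where "Q = matrix_inv C"
  define KK where "KK = pi ^ CARD('n) * Re (det C)"
  define e where "e m = (if m = k then s0 else 0)" for m
  define g where "g = g0 $ k"
  define y where "y c = (\<chi> m. z0 $ m + e m * (c - g))" for c
  have fe: "(\<lambda>c. complex_of_real (loglik ps (cgauss_pdf C) (\<chi> j. if j = Inr k then c else theta 0 g0 $ j) (mixA 0 g0 s0 z0)))
     = (\<lambda>c. complex_of_real (ln (ps s0) + (- Re (qf Q (y c)) - ln KK)))"
  proof
    fix c
    have hp: "hpart (\<chi> j. if j = Inr k then c else theta 0 g0 $ j) = 0"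
      by (simp add: hpart_def theta_def vec_eq_iff)
    have gp: "gpart (\<chi> j. if j = Inr k then c else theta 0 g0 $ j) = (\<chi> m. if m = k then c else g0 $ m)"
      by (simp add: gpart_def theta_def vec_eq_iff)
    have a2: "s0 *s (\<chi> m. if m = k then c else g0 $ m) - (s0 *s g0 - z0) = y c"
      by (auto simp: vec_eq_iff y_def e_def g_def algebra_simps)
    show "complex_of_real (loglik ps (cgauss_pdf C) (\<chi> j. if j = Inr k then c else theta 0 g0 $ j) (mixA 0 g0 s0 z0))
       = complex_of_real (ln (ps s0) + (- Re (qf Q (y c)) - ln KK))"
      unfolding loglik_def Let_def hp gp mixA_0 fst_conv snd_conv hdot_zero a2
      using ln_cgauss[OF K] by (simp add: Q_def KK_def)
  qed
  define A where "A = (\<Sum>j\<in>UNIV. Q $ k $ j * z0 $ j)"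
  define B where "B = (\<Sum>i\<in>UNIV. cnj (z0 $ i) * Q $ i $ k)"
  have "((\<lambda>c. qf Q (y c)) has_derivative
     (\<lambda>h. \<Sum>i\<in>UNIV. \<Sum>j\<in>UNIV. cnj (e i * h) * Q $ i $ j * z0 $ j + cnj (z0 $ i) * Q $ i $ j * (e j * h))) (at g)"
    unfolding qf_def y_def vec_lambda_beta
    by ((rule derivative_eq_intros refl | simp)+, auto simp: fun_eq_iff ac_simps intro!: sum.cong)
  moreover have "(\<lambda>h. \<Sum>i\<in>UNIV. \<Sum>j\<in>UNIV. cnj (e i * h) * Q $ i $ j * z0 $ j + cnj (z0 $ i) * Q $ i $ j * (e j * h))
      = (\<lambda>h. cnj (s0 * h) * A + B * (s0 * h))"
  proof
    fix h
    have 1: "(\<lambda>i. \<Sum>j\<in>UNIV. cnj (e i * h) * Q $ i $ j * z0 $ j) = (\<lambda>i. if i = k then cnj (s0 * h) * A else 0)"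
      by (auto simp: e_def A_def sum_distrib_left mult.assoc)
    have 2: "(\<lambda>i. \<Sum>j\<in>UNIV. cnj (z0 $ i) * Q $ i $ j * (e j * h)) = (\<lambda>i. cnj (z0 $ i) * Q $ i $ k * (s0 * h))"
    proof
      fix i
      have ee: "(\<lambda>j. cnj (z0 $ i) * Q $ i $ j * (e j * h)) = (\<lambda>j. if j = k then cnj (z0 $ i) * Q $ i $ k * (s0 * h) else 0)"
        by (auto simp: e_def)
      show "(\<Sum>j\<in>UNIV. cnj (z0 $ i) * Q $ i $ j * (e j * h)) = cnj (z0 $ i) * Q $ i $ k * (s0 * h)"
        unfolding ee by simp
    qed
    show "(\<Sum>i\<in>UNIV. \<Sum>j\<in>UNIV. cnj (e i * h) * Q $ i $ j * z0 $ j + cnj (z0 $ i) * Q $ i $ j * (e j * h))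
      = cnj (s0 * h) * A + B * (s0 * h)"
      unfolding sum.distrib 1 2 by (simp add: B_def sum_distrib_right)
  qed
  ultimately have dq: "((\<lambda>c. qf Q (y c)) has_derivative (\<lambda>h. cnj (s0 * h) * A + B * (s0 * h))) (at g)"
    by simp
  have "((\<lambda>c. complex_of_real (ln (ps s0) + (- Re (qf Q (y c)) - ln KK))) has_derivative
      (\<lambda>h. complex_of_real (0 + (- Re (cnj (s0 * h) * A + B * (s0 * h)) - 0)))) (at g)"
    by (intro has_derivative_of_real has_derivative_add has_derivative_diff has_derivative_minus
        has_derivative_const has_derivative_Re dq)
  note W = wirt_conj_eq[OF this]
  have t0: "theta 0 g0 $ Inr k = g" by (simp add: theta_def g_def)
  have BA: "B = cnj A"
  proof -
    have "B = (\<Sum>i\<in>UNIV. cnj (z0 $ i) * cnj (Q $ k $ i))"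
      unfolding B_def
    proof (rule sum.cong[OF refl])
      fix i show "cnj (z0 $ i) * Q $ i $ k = cnj (z0 $ i) * cnj (Q $ k $ i)"
        using herm[rule_format, of i k] by (simp add: Q_def)
    qed
    then show ?thesis by (simp add: A_def mult.commute)
  qed
  have Av: "(matrix_inv C *v z0) $ k = A"
    by (simp add: A_def Q_def matrix_vector_mult_def)
  show ?thesis
    unfolding wgrad_def vec_lambda_beta fe t0 W Av BA
    by (simp add: field_simps complex_eq_iff)
qed



lemma sum_UNIV_Plus: "sum f (UNIV :: ('a::finite + 'b::finite) set) = sum (\<lambda>i. f (Inl i)) UNIV + sum (\<lambda>i. f (Inr i)) UNIV"
  by (subst UNIV_Plus_UNIV[symmetric], subst sum.Plus) (auto simp: comp_def)

definition blk :: "('n \<Rightarrow> 'n \<Rightarrow> 'a) \<Rightarrow> ('n \<Rightarrow> 'n \<Rightarrow> 'a) \<Rightarrow> ('n \<Rightarrow> 'n \<Rightarrow> 'a) \<Rightarrow> ('n \<Rightarrow> 'n \<Rightarrow> 'a) \<Rightarrow> 'n + 'n \<Rightarrow> 'n + 'n \<Rightarrow> 'a" where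
  "blk A B C D \<alpha> \<beta> = (case \<alpha> of Inl i \<Rightarrow> (case \<beta> of Inl j \<Rightarrow> A i j | Inr j \<Rightarrow> B i j)
                                | Inr i \<Rightarrow> (case \<beta> of Inl j \<Rightarrow> C i j | Inr j \<Rightarrow> D i j))"

lemma blk_simps[simp]:
  "blk A B C D (Inl i) (Inl j) = A i j" "blk A B C D (Inl i) (Inr j) = B i j"
  "blk A B C D (Inr i) (Inl j) = C i j" "blk A B C D (Inr i) (Inr j) = D i j"
  by (simp_all add: blk_def)

lemma if_zero_mult: "(if P then (x::'a::mult_zero) else 0) * y = (if P then x * y else 0)"
  by simp
lemma mult_if_zero: "y * (if P then (x::'a::mult_zero) else 0) = (if P then y * x else 0)"
  by simp

lemma block_inv:
  fixes C Q :: "complex^'n^'n" and \<sigma>2 \<kappa> :: real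
  assumes CQ: "C ** Q = mat 1" and QC: "Q ** C = mat 1" and d: "\<sigma>2 * \<kappa> \<noteq> 1"
  defines "a \<equiv> complex_of_real (\<sigma>2 / (\<sigma>2 * \<kappa> - 1))"
    and "b \<equiv> complex_of_real (1 / (\<sigma>2 * \<kappa> - 1))"
    and "c \<equiv> complex_of_real (\<kappa> / (\<sigma>2 * \<kappa> - 1))"
  shows "(\<chi> \<alpha> \<beta>. blk (\<lambda>i j. of_real \<kappa> * C$i$j) (\<lambda>i j. - (if i = j then 1 else 0))
                     (\<lambda>i j. - (if i = j then 1 else 0)) (\<lambda>i j. of_real \<sigma>2 * Q$i$j) \<alpha> \<beta>)
      ** (\<chi> \<alpha> \<beta>. blk (\<lambda>i j. a * Q$i$j) (\<lambda>i j. if i = j then b else 0)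
                     (\<lambda>i j. if i = j then b else 0) (\<lambda>i j. c * C$i$j) \<alpha> \<beta>) = mat 1"
proof -
  have cq: "(\<Sum>m\<in>UNIV. C$i$m * Q$m$j) = (if i = j then 1 else 0)" for i j
    using CQ by (simp add: matrix_matrix_mult_def mat_def vec_eq_iff)
  have qc: "(\<Sum>m\<in>UNIV. Q$i$m * C$m$j) = (if i = j then 1 else 0)" for i j
    using QC by (simp add: matrix_matrix_mult_def mat_def vec_eq_iff)
  have d': "\<sigma>2 * \<kappa> - 1 \<noteq> 0" using d by simp
  have r1: "\<kappa> * (\<sigma>2 / (\<sigma>2 * \<kappa> - 1)) - 1 / (\<sigma>2 * \<kappa> - 1) = 1" using d' by (simp add: divide_simps)
  have r2: "\<kappa> * (1 / (\<sigma>2 * \<kappa> - 1)) - \<kappa> / (\<sigma>2 * \<kappa> - 1) = 0" using d' by (simp add: divide_simps)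
  have r3: "- (\<sigma>2 / (\<sigma>2 * \<kappa> - 1)) + \<sigma>2 * (1 / (\<sigma>2 * \<kappa> - 1)) = 0" using d' by (simp add: divide_simps)
  have r4: "- (1 / (\<sigma>2 * \<kappa> - 1)) + \<sigma>2 * (\<kappa> / (\<sigma>2 * \<kappa> - 1)) = 1" using d' by (simp add: divide_simps)
  have e1: "of_real \<kappa> * a - b = 1" unfolding a_def b_def by (metis r1 of_real_1 of_real_diff of_real_mult)
  have e2: "of_real \<kappa> * b - c = 0" unfolding c_def b_def by (metis r2 of_real_0 of_real_diff of_real_mult)
  have e3: "- a + of_real \<sigma>2 * b = 0" unfolding a_def b_def by (metis r3 of_real_0 of_real_add of_real_minus of_real_mult)
  have e4: "- b + of_real \<sigma>2 * c = 1" unfolding c_def b_def by (metis r4 of_real_1 of_real_add of_real_minus of_real_mult)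
  have entry: "(\<Sum>k\<in>UNIV. blk (\<lambda>i j. of_real \<kappa> * C$i$j) (\<lambda>i j. - (if i = j then 1 else 0))
                     (\<lambda>i j. - (if i = j then 1 else 0)) (\<lambda>i j. of_real \<sigma>2 * Q$i$j) \<alpha> k *
           blk (\<lambda>i j. a * Q$i$j) (\<lambda>i j. if i = j then b else 0)
                     (\<lambda>i j. if i = j then b else 0) (\<lambda>i j. c * C$i$j) k \<beta>) = (if \<alpha> = \<beta> then 1 else 0)" for \<alpha> \<beta> :: "'n + 'n"
    proof (cases \<alpha>; cases \<beta>)
      fix i j assume [simp]: "\<alpha> = Inl i" "\<beta> = Inl j"
      have "(\<Sum>m\<in>UNIV. of_real \<kappa> * C$i$m * (a * Q$m$j)) = of_real \<kappa> * a * (if i = j then 1 else 0)"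
        by (simp add: cq[symmetric] sum_distrib_left ac_simps)
      then show ?thesis using e1 by (simp add: sum_UNIV_Plus algebra_simps if_zero_mult mult_if_zero sum_negf)
    next
      fix i j assume [simp]: "\<alpha> = Inl i" "\<beta> = Inr j"
      show ?thesis using e2 by (simp add: sum_UNIV_Plus algebra_simps if_zero_mult mult_if_zero sum_negf)
    next
      fix i j assume [simp]: "\<alpha> = Inr i" "\<beta> = Inl j"
      show ?thesis using e3 by (simp add: sum_UNIV_Plus algebra_simps if_zero_mult mult_if_zero sum_negf)
    next
      fix i j assume [simp]: "\<alpha> = Inr i" "\<beta> = Inr j"
      have "(\<Sum>m\<in>UNIV. of_real \<sigma>2 * Q$i$m * (c * C$m$j)) = of_real \<sigma>2 * c * (if i = j then 1 else 0)"
        by (simp add: qc[symmetric] sum_distrib_left ac_simps)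
      then show ?thesis using e4 by (simp add: sum_UNIV_Plus algebra_simps if_zero_mult mult_if_zero sum_negf)
    qed
  show ?thesis by (simp add: matrix_matrix_mult_def mat_def vec_eq_iff entry)
qed



lemma matrix_inv_eqI:
  fixes A K :: "'a::field^'n^'n"
  assumes "A ** K = mat 1"
  shows "matrix_inv A = K"
proof -
  have KA: "K ** A = mat 1" using assms matrix_left_right_inverse by blast
  have "\<exists>A'. A ** A' = mat 1 \<and> A' ** A = mat 1" using assms KA by blast
  then have "A ** matrix_inv A = mat 1 \<and> matrix_inv A ** A = mat 1"
    unfolding matrix_inv_def by (rule someI_ex)
  then have inv: "matrix_inv A ** A = mat 1" by simp
  have "matrix_inv A = matrix_inv A ** (A ** K)" using assms by simp
  also have "\<dots> = (matrix_inv A ** A) ** K" by (simp add: matrix_mul_assoc)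
  also have "\<dots> = K" using inv by simp
  finally show ?thesis .
qed

lemma cfim_blk: "cfim TYPE('m::finite) F 0 $ a $ b
   = blk (\<lambda>i j. F$i$j) (\<lambda>i j. 0) (\<lambda>i j. 0) (\<lambda>i j. cnj (F$i$j)) a b"
  by (cases a; cases b) (simp_all add: cfim_def)

lemma big_inv:
  fixes F G :: "complex^'m::finite^'m"
  assumes FG: "F ** G = mat 1" and N: "N > 0"
  shows "matrix_inv (\<chi> a b. of_nat N * cfim TYPE('m) F 0 $ a $ b)
    = (\<chi> a b. blk (\<lambda>\<alpha> \<beta>. G$\<alpha>$\<beta> / of_nat N) (\<lambda>_ _. 0) (\<lambda>_ _. 0) (\<lambda>\<alpha> \<beta>. cnj (G$\<alpha>$\<beta>) / of_nat N) a b)"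
proof (rule matrix_inv_eqI)
  have fg: "(\<Sum>m\<in>UNIV. F$i$m * G$m$j) = (if i = j then 1 else 0)" for i j
    using FG by (simp add: matrix_matrix_mult_def mat_def vec_eq_iff)
  have fg': "(\<Sum>m\<in>UNIV. cnj (F$i$m) * cnj (G$m$j)) = (if i = j then 1 else 0)" for i j
  proof -
    have "(\<Sum>m\<in>UNIV. cnj (F$i$m) * cnj (G$m$j)) = cnj (\<Sum>m\<in>UNIV. F$i$m * G$m$j)" by simp
    then show ?thesis by (simp add: fg)
  qed
  have Nz: "(of_nat N :: complex) \<noteq> 0" using N by simp
  have entry: "(\<Sum>k\<in>UNIV. of_nat N * blk (\<lambda>i j. F$i$j) (\<lambda>i j. 0) (\<lambda>i j. 0) (\<lambda>i j. cnj (F$i$j)) a k *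
       blk (\<lambda>\<alpha> \<beta>. G$\<alpha>$\<beta> / of_nat N) (\<lambda>_ _. 0) (\<lambda>_ _. 0) (\<lambda>\<alpha> \<beta>. cnj (G$\<alpha>$\<beta>) / of_nat N) k b)
     = (if a = b then 1 else 0)" for a b :: "'m + 'm"
  proof (cases a; cases b)
    fix i j assume [simp]: "a = Inl i" "b = Inl j"
    have "(\<Sum>k\<in>UNIV. of_nat N * F$i$k * (G$k$j / of_nat N)) = (\<Sum>k\<in>UNIV. F$i$k * G$k$j)"
      using Nz by (intro sum.cong) (auto simp: field_simps)
    then show ?thesis by (simp add: sum_UNIV_Plus fg)
  next
    fix i j assume [simp]: "a = Inl i" "b = Inr j"
    show ?thesis by (simp add: sum_UNIV_Plus)
  next
    fix i j assume [simp]: "a = Inr i" "b = Inl j"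
    show ?thesis by (simp add: sum_UNIV_Plus)
  next
    fix i j assume [simp]: "a = Inr i" "b = Inr j"
    have "(\<Sum>k\<in>UNIV. of_nat N * cnj (F$i$k) * (cnj (G$k$j) / of_nat N)) = (\<Sum>k\<in>UNIV. cnj (F$i$k) * cnj (G$k$j))"
      using Nz by (intro sum.cong) (auto simp: field_simps)
    then show ?thesis by (simp add: sum_UNIV_Plus fg')
  qed
  show "(\<chi> a b. of_nat N * cfim TYPE('m) F 0 $ a $ b) **
    (\<chi> a b. blk (\<lambda>\<alpha> \<beta>. G$\<alpha>$\<beta> / of_nat N) (\<lambda>_ _. 0) (\<lambda>_ _. 0) (\<lambda>\<alpha> \<beta>. cnj (G$\<alpha>$\<beta>) / of_nat N) a b) = mat 1"
    unfolding cfim_blk matrix_matrix_mult_def mat_def vec_lambda_beta entry by simp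
qed



lemma herm_pd_facts:
  fixes C :: "complex^'n^'n"
  assumes pd: "herm_pd C"
  shows "C ** matrix_inv C = mat 1" "matrix_inv C ** C = mat 1"
    "\<forall>i j. matrix_inv C $ i $ j = cnj (matrix_inv C $ j $ i)"
    "\<And>i. Re (C$i$i) > 0"
proof -
  have herm: "C$i$j = cnj (C$j$i)" for i j using pd unfolding herm_pd_def by blast
  have pos: "v \<noteq> 0 \<Longrightarrow> Re (\<Sum>i\<in>UNIV. \<Sum>j\<in>UNIV. cnj (v $ i) * C $ i $ j * v $ j) > 0" for v
    using pd unfolding herm_pd_def by blast
  have ker: "\<forall>x. C *v x = 0 \<longrightarrow> x = 0"
  proof (intro allI impI)
    fix x assume Cx: "C *v x = 0"
    have "(\<Sum>i\<in>UNIV. \<Sum>j\<in>UNIV. cnj (x $ i) * C $ i $ j * x $ j) = (\<Sum>i\<in>UNIV. cnj (x $ i) * (C *v x) $ i)"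
      by (simp add: matrix_vector_mult_def sum_distrib_left mult.assoc)
    also have "\<dots> = 0" using Cx by simp
    finally show "x = 0" using pos[of x] by (cases "x = 0") auto
  qed
  then have "\<exists>B. B ** C = mat 1" using matrix_left_invertible_ker by blast
  then have "invertible C" using invertible_left_inverse by blast
  then have "\<exists>A'. C ** A' = mat 1 \<and> A' ** C = mat 1" unfolding invertible_def by blast
  then have inv: "C ** matrix_inv C = mat 1 \<and> matrix_inv C ** C = mat 1"
    unfolding matrix_inv_def by (rule someI_ex)
  then show CQ: "C ** matrix_inv C = mat 1" and QC: "matrix_inv C ** C = mat 1" by auto
  define Q where "Q = matrix_inv C"
  have qc: "(\<Sum>m\<in>UNIV. Q$i$m * C$m$j) = (if i = j then 1 else 0)" for i j
    using QC by (simp add: Q_def matrix_matrix_mult_def mat_def vec_eq_iff)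
  have "C ** (\<chi> i j. cnj (Q $ j $ i)) = mat 1"
  proof -
    have "(\<Sum>m\<in>UNIV. C$i$m * cnj (Q$j$m)) = (if i = j then 1 else 0)" for i j
    proof -
      have "(\<Sum>m\<in>UNIV. C$i$m * cnj (Q$j$m)) = cnj (\<Sum>m\<in>UNIV. Q$j$m * C$m$i)"
        by (simp add: herm[of i] mult.commute)
      then show ?thesis by (simp add: qc)
    qed
    then show ?thesis by (simp add: matrix_matrix_mult_def mat_def vec_eq_iff)
  qed
  from matrix_inv_eqI[OF this]
  show "\<forall>i j. matrix_inv C $ i $ j = cnj (matrix_inv C $ j $ i)"
    unfolding Q_def[symmetric] by (metis vec_lambda_beta)
  fix i :: 'n
  have ax: "axis i (1::complex) \<noteq> 0" by (simp add: axis_eq_0_iff)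
  have "(\<Sum>a\<in>UNIV. \<Sum>b\<in>UNIV. cnj (axis i 1 $ a) * C $ a $ b * axis i (1::complex) $ b) = C$i$i"
    by (simp add: axis_def if_zero_mult mult_if_zero if_distrib[where f=cnj] cong: if_cong)
  then show "Re (C$i$i) > 0" using pos[OF ax] by simp
qed



lemma mem_box_cvec:
  fixes l u x :: "complex^'n"
  shows "x \<in> box l u \<longleftrightarrow> (\<forall>j. Re (l$j) < Re (x$j) \<and> Re (x$j) < Re (u$j) \<and> Im (l$j) < Im (x$j) \<and> Im (x$j) < Im (u$j))"
  by (auto simp: mem_box Basis_vec_def inner_axis Basis_complex_def inner_complex_def)

lemma rot_measurable: "(\<lambda>y::complex^'n. \<chi> j. \<i> * y$j) \<in> borel_measurable borel"
  by (intro borel_measurable_continuous_onI continuous_intros)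

lemma lborel_rot: "distr lborel borel (\<lambda>y::complex^'n. \<chi> j. \<i> * y$j) = lborel"
proof (rule lborel_eqI[symmetric])
  let ?T = "\<lambda>y::complex^'n. \<chi> j. \<i> * y$j"
  fix l u :: "complex^'n"
  assume le: "\<And>b. b \<in> Basis \<Longrightarrow> l \<bullet> b \<le> u \<bullet> b"
  define l' where "l' = (\<chi> j. Complex (Im (l$j)) (- Re (u$j)))"
  define u' where "u' = (\<chi> j. Complex (Im (u$j)) (- Re (l$j)))"
  have pre: "?T -` box l u \<inter> space lborel = box l' u'"
    by (auto simp: mem_box_cvec l'_def u'_def; smt (verit))
  have le1: "Re (l$j) \<le> Re (u$j)" "Im (l$j) \<le> Im (u$j)" for j
    using le[of "axis j 1"] le[of "axis j \<i>"]
    by (auto simp: Basis_vec_def inner_axis Basis_complex_def inner_complex_def)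
  have le': "\<forall>b\<in>Basis. l' \<bullet> b \<le> u' \<bullet> b"
    using le1 by (auto simp: Basis_vec_def inner_axis Basis_complex_def inner_complex_def l'_def u'_def)
  define \<sigma> where "\<sigma> b = (\<chi> j. \<i> * cnj (b$j))" for b :: "complex^'n"
  have \<sigma>\<sigma>: "\<sigma> (\<sigma> b) = b" for b by (simp add: \<sigma>_def vec_eq_iff)
  have \<sigma>B: "\<sigma> b \<in> Basis" if "b \<in> Basis" for b
  proof -
    from that obtain j e where "b = axis j e" "e \<in> {1, \<i>}"
      by (auto simp: Basis_vec_def Basis_complex_def)
    then show ?thesis
      by (auto simp: \<sigma>_def Basis_vec_def Basis_complex_def axis_def vec_eq_iff intro!: exI[of _ j])
  qed
  have bij: "bij_betw \<sigma> Basis Basis"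
    by (rule bij_betw_byWitness[where f'=\<sigma>]) (auto simp: \<sigma>\<sigma> \<sigma>B)
  have eqb: "(u' - l') \<bullet> b = (u - l) \<bullet> \<sigma> b" if "b \<in> Basis" for b
  proof -
    from that obtain j e where "b = axis j e" "e \<in> {1, \<i>}"
      by (auto simp: Basis_vec_def Basis_complex_def)
    moreover have "\<sigma> (axis j e) = axis j (\<i> * cnj e)"
      by (simp add: \<sigma>_def axis_def vec_eq_iff)
    ultimately show ?thesis
      by (auto simp: inner_axis inner_complex_def l'_def u'_def)
  qed
  have "(\<Prod>b\<in>Basis. (u' - l') \<bullet> b) = (\<Prod>b\<in>Basis. (u - l) \<bullet> \<sigma> b)"
    by (rule prod.cong[OF refl]) (rule eqb)
  also have "\<dots> = (\<Prod>b\<in>Basis. (u - l) \<bullet> b)"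
    using prod.reindex_bij_betw[OF bij, of "\<lambda>b. (u - l) \<bullet> b"] by simp
  finally have pr: "(\<Prod>b\<in>Basis. (u' - l') \<bullet> b) = (\<Prod>b\<in>Basis. (u - l) \<bullet> b)" .
  show "emeasure (distr lborel borel ?T) (box l u) = (\<Prod>b\<in>Basis. (u - l) \<bullet> b)"
  proof -
    have "emeasure (distr lborel borel ?T) (box l u) = emeasure lborel (?T -` box l u \<inter> space lborel)"
      by (rule emeasure_distr) (use rot_measurable in auto)
    also have "\<dots> = emeasure lborel (box l' u')" by (simp only: pre)
    also have "\<dots> = (\<Prod>b\<in>Basis. (u' - l') \<bullet> b)" using le' by (simp add: emeasure_lborel_box_eq)
    finally show ?thesis using pr by simp
  qed
qed simp



context prob_space begin

lemma indep_comp: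
  fixes s :: "'a \<Rightarrow> 'b::topological_space" and z :: "'a \<Rightarrow> 'c::topological_space"
    and f :: "'b \<Rightarrow> complex" and g :: "'c \<Rightarrow> complex"
  assumes s: "s \<in> borel_measurable M" and z: "z \<in> borel_measurable M"
    and f: "f \<in> borel_measurable borel" and g: "g \<in> borel_measurable borel"
    and rect: "\<forall>A\<in>sets (borel :: 'b measure). \<forall>B\<in>sets (borel :: 'c measure).
        measure M ({\<omega>\<in>space M. s \<omega> \<in> A \<and> z \<omega> \<in> B}) =
        measure M ({\<omega>\<in>space M. s \<omega> \<in> A}) * measure M ({\<omega>\<in>space M. z \<omega> \<in> B})"
  shows "indep_var borel (\<lambda>\<omega>. f (s \<omega>)) borel (\<lambda>\<omega>. g (z \<omega>))"
proof -
  let ?X = "\<lambda>\<omega>. f (s \<omega>)" and ?Y = "\<lambda>\<omega>. g (z \<omega>)"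
  have X: "?X \<in> borel_measurable M" using s f by measurable
  have Y: "?Y \<in> borel_measurable M" using z g by measurable
  let ?SX = "{?X -` A \<inter> space M | A. A \<in> sets (borel :: complex measure)}"
  let ?SY = "{?Y -` A \<inter> space M | A. A \<in> sets (borel :: complex measure)}"
  have "indep_set ?SX ?SY"
    unfolding indep_sets2_eq
  proof (intro conjI ballI)
    show "?SX \<subseteq> events" using X by (auto simp: measurable_sets)
    show "?SY \<subseteq> events" using Y by (auto simp: measurable_sets)
    fix a b assume "a \<in> ?SX" "b \<in> ?SY"
    then obtain A B where a: "a = ?X -` A \<inter> space M" "A \<in> sets borel"
      and b: "b = ?Y -` B \<inter> space M" "B \<in> sets borel" by blast
    have A': "f -` A \<in> sets borel" using f a(2) by (simp add: measurable_sets_borel)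
    have B': "g -` B \<in> sets borel" using g b(2) by (simp add: measurable_sets_borel)
    have e1: "a \<inter> b = {\<omega>\<in>space M. s \<omega> \<in> f -` A \<and> z \<omega> \<in> g -` B}" using a b by auto
    have e2: "a = {\<omega>\<in>space M. s \<omega> \<in> f -` A}" using a by auto
    have e3: "b = {\<omega>\<in>space M. z \<omega> \<in> g -` B}" using b by auto
    have r: "prob {\<omega>\<in>space M. s \<omega> \<in> f -` A \<and> z \<omega> \<in> g -` B}
       = prob {\<omega>\<in>space M. s \<omega> \<in> f -` A} * prob {\<omega>\<in>space M. z \<omega> \<in> g -` B}"
      using rect A' B' by blast
    show "prob (a \<inter> b) = prob a * prob b"
      unfolding e1 r by (simp only: e2 e3)
  qed
  moreover have "(\<lambda>i. {case_bool ?X ?Y i -` A \<inter> space M | A. A \<in> sets (case_bool borel borel i)}) = case_bool ?SX ?SY"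
    by (rule ext) (simp split: bool.split)
  ultimately show ?thesis
    unfolding indep_var_def indep_vars_def2 indep_set_def using X Y
    by (auto split: bool.split)
qed

lemma indep_prod:
  fixes s :: "'a \<Rightarrow> 'b::topological_space" and z :: "'a \<Rightarrow> 'c::topological_space"
    and f :: "'b \<Rightarrow> complex" and g :: "'c \<Rightarrow> complex"
  assumes s: "s \<in> borel_measurable M" and z: "z \<in> borel_measurable M"
    and f: "f \<in> borel_measurable borel" and g: "g \<in> borel_measurable borel"
    and rect: "\<forall>A\<in>sets (borel :: 'b measure). \<forall>B\<in>sets (borel :: 'c measure).
        measure M ({\<omega>\<in>space M. s \<omega> \<in> A \<and> z \<omega> \<in> B}) =
        measure M ({\<omega>\<in>space M. s \<omega> \<in> A}) * measure M ({\<omega>\<in>space M. z \<omega> \<in> B})"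
    and If: "integrable M (\<lambda>\<omega>. f (s \<omega>))" and Ig: "integrable M (\<lambda>\<omega>. g (z \<omega>))"
  shows "integral\<^sup>L M (\<lambda>\<omega>. f (s \<omega>) * g (z \<omega>)) = integral\<^sup>L M (\<lambda>\<omega>. f (s \<omega>)) * integral\<^sup>L M (\<lambda>\<omega>. g (z \<omega>))"
  using indep_var_lebesgue_integral[OF indep_comp[OF s z f g rect] If Ig] .

end

lemma int_prod:
  fixes x y :: "'a \<Rightarrow> complex"
  assumes "integrable M (\<lambda>\<omega>. (cmod (x \<omega>))\<^sup>2)" "integrable M (\<lambda>\<omega>. (cmod (y \<omega>))\<^sup>2)"
    and "x \<in> borel_measurable M" "y \<in> borel_measurable M"
  shows "integrable M (\<lambda>\<omega>. x \<omega> * y \<omega>)"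
proof (rule Bochner_Integration.integrable_bound)
  show "integrable M (\<lambda>\<omega>. (cmod (x \<omega>))\<^sup>2 + (cmod (y \<omega>))\<^sup>2)" using assms by simp
  show "(\<lambda>\<omega>. x \<omega> * y \<omega>) \<in> borel_measurable M" using assms by simp
  show "AE \<omega> in M. norm (x \<omega> * y \<omega>) \<le> norm ((cmod (x \<omega>))\<^sup>2 + (cmod (y \<omega>))\<^sup>2)"
  proof (rule AE_I2)
    fix \<omega>
    have "0 \<le> (cmod (x \<omega>) - cmod (y \<omega>))\<^sup>2" by simp
    then have "cmod (x \<omega>) * cmod (y \<omega>) \<le> (cmod (x \<omega>))\<^sup>2 + (cmod (y \<omega>))\<^sup>2"
      by (simp add: power2_eq_square algebra_simps) (smt (verit) norm_ge_zero mult_nonneg_nonneg)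
    then show "norm (x \<omega> * y \<omega>) \<le> norm ((cmod (x \<omega>))\<^sup>2 + (cmod (y \<omega>))\<^sup>2)"
      by (simp add: norm_mult)
  qed
qed

lemma sq_cnj: "(cmod (cnj x))\<^sup>2 = (cmod x)\<^sup>2" by simp



lemma psi_meas:
  fixes ps :: "complex \<Rightarrow> real"
  assumes pos: "\<forall>u. ps u > 0" and dif: "\<forall>u. ps differentiable (at u)"
    and reg: "integrable lborel (\<lambda>u. wirt_conj (\<lambda>u. complex_of_real (ps u) * cnj u) u)"
  shows "psi ps \<in> borel_measurable borel"
proof -
  define W where "W u = wirt_conj (\<lambda>u. complex_of_real (ps u) * cnj u) u" for u
  have Wm: "W \<in> borel_measurable borel"
    using borel_measurable_integrable[OF reg] unfolding W_def by simp
  have psc: "continuous_on UNIV ps"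
    using dif by (intro differentiable_imp_continuous_on differentiable_at_imp_differentiable_on) auto
  have psm: "(\<lambda>u. complex_of_real (ps u)) \<in> borel_measurable borel"
    by (intro borel_measurable_continuous_onI continuous_intros psc)
  have cm: "(\<lambda>u. cnj u :: complex) \<in> borel_measurable borel"
    by (intro borel_measurable_continuous_onI continuous_intros)
  have eq: "psi ps = (\<lambda>u. if u = 0 then psi ps 0 else (of_real (ps u) - W u) / (of_real (ps u) * cnj u))"
  proof
    fix u
    show "psi ps u = (if u = 0 then psi ps 0 else (of_real (ps u) - W u) / (of_real (ps u) * cnj u))"
    proof (cases "u = 0")
      case False
      have "W u = of_real (ps u) - of_real (ps u) * cnj u * psi ps u"
        unfolding W_def by (rule ps_facts(4)[OF pos[rule_format] dif[rule_format]])
      then have e: "of_real (ps u) - W u = (of_real (ps u) * cnj u) * psi ps u" by simp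
      have "ps u \<noteq> 0" using pos by (metis less_irrefl)
      then have nz: "complex_of_real (ps u) * cnj u \<noteq> 0" using False by simp
      show ?thesis using False unfolding e using nz by simp
    qed simp
  qed
  show ?thesis
    apply (subst eq)
    by (rule measurable_If) (auto intro!: borel_measurable_divide borel_measurable_diff borel_measurable_times Wm psm cm)
qed

lemma dist_transfer:
  fixes X :: "'a \<Rightarrow> 'b::euclidean_space" and f :: "'b \<Rightarrow> real" and h :: "'b \<Rightarrow> complex"
  assumes D: "distributed M lborel X (\<lambda>x. ennreal (f x))" and nn: "\<forall>x. 0 \<le> f x"
    and h: "h \<in> borel_measurable borel"
  shows "integral\<^sup>L M (\<lambda>\<omega>. h (X \<omega>)) = integral\<^sup>L lborel (\<lambda>x. f x *\<^sub>R h x)"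
    and "integrable M (\<lambda>\<omega>. h (X \<omega>)) \<longleftrightarrow> integrable lborel (\<lambda>x. f x *\<^sub>R h x)"
proof -
  have fm: "f \<in> borel_measurable lborel"
    using distributed_real_measurable[OF _ D] nn by simp
  have Xm: "X \<in> measurable M lborel" using distributed_measurable[OF D] .
  have hm: "h \<in> borel_measurable lborel" using h by simp
  have "integral\<^sup>L M (\<lambda>\<omega>. h (X \<omega>)) = integral\<^sup>L (distr M lborel X) h"
    by (rule integral_distr[symmetric, OF Xm hm])
  also have "\<dots> = integral\<^sup>L (density lborel (\<lambda>x. ennreal (f x))) h"
    using distributed_distr_eq_density[OF D] by simp
  also have "\<dots> = integral\<^sup>L lborel (\<lambda>x. f x *\<^sub>R h x)"
    by (rule integral_density[OF hm fm]) (use nn in auto)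
  finally show "integral\<^sup>L M (\<lambda>\<omega>. h (X \<omega>)) = integral\<^sup>L lborel (\<lambda>x. f x *\<^sub>R h x)" .
  have "integrable M (\<lambda>\<omega>. h (X \<omega>)) \<longleftrightarrow> integrable (distr M lborel X) h"
    by (rule integrable_distr_eq[symmetric, OF Xm hm])
  also have "\<dots> \<longleftrightarrow> integrable (density lborel (\<lambda>x. ennreal (f x))) h"
    using distributed_distr_eq_density[OF D] by simp
  also have "\<dots> \<longleftrightarrow> integrable lborel (\<lambda>x. f x *\<^sub>R h x)"
    by (rule integrable_density[OF hm fm]) (use nn in auto)
  finally show "integrable M (\<lambda>\<omega>. h (X \<omega>)) \<longleftrightarrow> integrable lborel (\<lambda>x. f x *\<^sub>R h x)" .
qed

lemma s_psi_moment:
  fixes ps :: "complex \<Rightarrow> real" and s :: "'a \<Rightarrow> complex"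
  assumes prob: "prob_space M"
    and D: "distributed M lborel s (\<lambda>u. ennreal (ps u))"
    and pos: "\<forall>u. ps u > 0" and dif: "\<forall>u. ps differentiable (at u)"
    and reg: "integrable lborel (\<lambda>u. wirt_conj (\<lambda>u. complex_of_real (ps u) * cnj u) u)"
             "integral\<^sup>L lborel (\<lambda>u. wirt_conj (\<lambda>u. complex_of_real (ps u) * cnj u) u) = 0"
  shows "integral\<^sup>L M (\<lambda>\<omega>. cnj (s \<omega>) * psi ps (s \<omega>)) = 1"
proof -
  interpret prob_space M by fact
  define W where "W u = wirt_conj (\<lambda>u. complex_of_real (ps u) * cnj u) u" for u
  have nn: "\<forall>u. 0 \<le> ps u" using pos by (simp add: less_imp_le)
  have pm: "psi ps \<in> borel_measurable borel" by (rule psi_meas[OF pos dif reg(1)])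
  have cm: "(cnj :: complex \<Rightarrow> complex) \<in> borel_measurable borel"
    by (intro borel_measurable_continuous_onI continuous_intros)
  have h1: "(\<lambda>u. cnj u * psi ps u) \<in> borel_measurable borel"
    using cm pm by (rule borel_measurable_times)
  have "integral\<^sup>L M (\<lambda>\<omega>. cnj (s \<omega>) * psi ps (s \<omega>)) = integral\<^sup>L lborel (\<lambda>u. ps u *\<^sub>R (cnj u * psi ps u))"
    by (rule dist_transfer(1)[OF D nn h1])
  also have "\<dots> = integral\<^sup>L lborel (\<lambda>u. complex_of_real (ps u) - W u)"
  proof (rule Bochner_Integration.integral_cong[OF refl])
    fix u
    have "W u = of_real (ps u) - of_real (ps u) * cnj u * psi ps u"
      unfolding W_def by (rule ps_facts(4)[OF pos[rule_format] dif[rule_format]])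
    then show "ps u *\<^sub>R (cnj u * psi ps u) = complex_of_real (ps u) - W u"
      by (simp add: scaleR_conv_of_real mult.assoc)
  qed
  also have "\<dots> = integral\<^sup>L lborel (\<lambda>u. complex_of_real (ps u)) - integral\<^sup>L lborel W"
  proof (rule Bochner_Integration.integral_diff)
    have "integrable M (\<lambda>\<omega>. (\<lambda>_. 1::complex) (s \<omega>))" by simp
    then have "integrable lborel (\<lambda>u. ps u *\<^sub>R (1::complex))"
      using dist_transfer(2)[OF D nn, of "\<lambda>_. 1"] by simp
    then show "integrable lborel (\<lambda>u. complex_of_real (ps u))" by (simp add: scaleR_conv_of_real)
    show "integrable lborel W" using reg(1) unfolding W_def .
  qed
  also have "integral\<^sup>L lborel (\<lambda>u. complex_of_real (ps u)) = 1"
  proof -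
    have "integral\<^sup>L M (\<lambda>\<omega>. (\<lambda>_. 1::complex) (s \<omega>)) = integral\<^sup>L lborel (\<lambda>u. ps u *\<^sub>R (1::complex))"
      by (rule dist_transfer(1)[OF D nn]) simp
    then show ?thesis using prob_space by (simp add: scaleR_conv_of_real)
  qed
  also have "integral\<^sup>L lborel W = 0" using reg(2) unfolding W_def .
  finally show ?thesis by simp
qed



lemma cgauss_rot: "cgauss_pdf C (\<chi> j. \<i> * y$j) = cgauss_pdf C (y :: complex^'n)"
proof -
  have "cnj (\<i> * y$i) * Q $ i $ j * (\<i> * y$j) = cnj (y$i) * Q $ i $ j * y$j" for i j and Q :: "complex^'n^'n"
    by (simp add: algebra_simps)
  then show ?thesis unfolding cgauss_pdf_def by simp
qed

lemma z_facts:
  fixes z :: "'a \<Rightarrow> complex^'n" and C :: "complex^'n^'n"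
  assumes prob: "prob_space M"
    and D: "distributed M lborel z (\<lambda>y. ennreal (cgauss_pdf C y))"
    and C_pd: "herm_pd C"
    and C_cov: "C = (\<chi> i j. integral\<^sup>L M (\<lambda>\<omega>. z \<omega> $ i * cnj (z \<omega> $ j)))"
  shows "pi ^ CARD('n) * Re (det C) > 0"
    and "\<And>a. integrable M (\<lambda>\<omega>. (cmod (z \<omega> $ a))\<^sup>2)"
    and "\<And>a b. integral\<^sup>L M (\<lambda>\<omega>. z \<omega> $ a * z \<omega> $ b) = 0"
proof -
  interpret prob_space M by fact
  define KK where "KK = pi ^ CARD('n) * Re (det C)"
  have "emeasure lborel {x \<in> space lborel. ennreal (cgauss_pdf C x) \<noteq> 0} \<noteq> 0"
    by (rule distributed_imp_emeasure_nonzero[OF D])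
  then obtain y where "ennreal (cgauss_pdf C y) \<noteq> 0" by fastforce
  then have "cgauss_pdf C y > 0" by (simp add: ennreal_eq_0_iff not_le)
  then show KK: "pi ^ CARD('n) * Re (det C) > 0"
    unfolding cgauss_pdf_def by (simp add: zero_less_divide_iff)
  have nn: "\<forall>y. 0 \<le> cgauss_pdf C y"
    using KK unfolding cgauss_pdf_def by (simp add: less_imp_le)
  have zm: "z \<in> borel_measurable M" using distributed_measurable[OF D] by simp
  have "(\<lambda>v::complex^'n. v$a) \<in> borel_measurable borel" for a
    by (intro borel_measurable_continuous_onI continuous_intros)
  from measurable_compose[OF zm this]
  have zam: "(\<lambda>\<omega>. z \<omega> $ a) \<in> borel_measurable M" for a .
  show "integrable M (\<lambda>\<omega>. (cmod (z \<omega> $ a))\<^sup>2)" for a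
  proof -
    have "Re (C $ a $ a) > 0" using herm_pd_facts(4)[OF C_pd] .
    have "integral\<^sup>L M (\<lambda>\<omega>. z \<omega> $ a * cnj (z \<omega> $ a)) \<noteq> 0"
    proof (rule notI)
      assume "integral\<^sup>L M (\<lambda>\<omega>. z \<omega> $ a * cnj (z \<omega> $ a)) = 0"
      moreover have "C $ a $ a = integral\<^sup>L M (\<lambda>\<omega>. z \<omega> $ a * cnj (z \<omega> $ a))"
        using arg_cong[OF C_cov, of "\<lambda>X. X $ a $ a"] by simp
      ultimately show False using \<open>Re (C $ a $ a) > 0\<close> by simp
    qed
    then have "integrable M (\<lambda>\<omega>. z \<omega> $ a * cnj (z \<omega> $ a))"
      using not_integrable_integral_eq by blast
    then have "integrable M (\<lambda>\<omega>. Re (z \<omega> $ a * cnj (z \<omega> $ a)))"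
      by (rule integrable_bounded_linear[OF bounded_linear_Re])
    moreover have "(\<lambda>\<omega>. Re (z \<omega> $ a * cnj (z \<omega> $ a))) = (\<lambda>\<omega>. (cmod (z \<omega> $ a))\<^sup>2)"
      by (simp flip: complex_norm_square)
    ultimately show ?thesis by simp
  qed
  show "integral\<^sup>L M (\<lambda>\<omega>. z \<omega> $ a * z \<omega> $ b) = 0" for a b
  proof -
    define T where "T = (\<lambda>y::complex^'n. \<chi> j. \<i> * y$j)"
    define h where "h y = cgauss_pdf C y *\<^sub>R (y$a * y$b)" for y
    have hm0: "(\<lambda>y::complex^'n. y$a * y$b) \<in> borel_measurable borel"
      by (intro borel_measurable_continuous_onI continuous_intros)
    have pm: "cgauss_pdf C \<in> borel_measurable borel"
      using distributed_real_measurable[OF _ D] nn by simp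
    have hm: "h \<in> borel_measurable borel" unfolding h_def using pm hm0 by measurable
    have Tm: "T \<in> measurable lborel borel" unfolding T_def using rot_measurable by simp
    have "integral\<^sup>L M (\<lambda>\<omega>. z \<omega> $ a * z \<omega> $ b) = integral\<^sup>L lborel h"
      unfolding h_def by (rule dist_transfer(1)[OF D nn hm0])
    also have "\<dots> = integral\<^sup>L (distr lborel borel T) h"
      unfolding T_def lborel_rot by simp
    also have "\<dots> = integral\<^sup>L lborel (\<lambda>y. h (T y))"
      by (rule integral_distr[OF Tm hm])
    also have "\<dots> = integral\<^sup>L lborel (\<lambda>y. - h y)"
    proof (rule Bochner_Integration.integral_cong[OF refl])
      fix y :: "complex^'n"
      have ii: "(\<i> * y$a) * (\<i> * y$b) = - (y$a * y$b)" by (simp add: algebra_simps)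
      have "h (T y) = cgauss_pdf C y *\<^sub>R ((\<i> * y$a) * (\<i> * y$b))"
        unfolding h_def T_def by (simp only: cgauss_rot vec_lambda_beta)
      also have "\<dots> = - h y" unfolding h_def ii by simp
      finally show "h (T y) = - h y" .
    qed
    also have "\<dots> = - integral\<^sup>L lborel h" by simp
    finally have "integral\<^sup>L lborel h = - integral\<^sup>L lborel h"
      using \<open>integral\<^sup>L M (\<lambda>\<omega>. z \<omega> $ a * z \<omega> $ b) = integral\<^sup>L lborel h\<close> by simp
    then have "integral\<^sup>L lborel h = 0" by simp
    with \<open>integral\<^sup>L M (\<lambda>\<omega>. z \<omega> $ a * z \<omega> $ b) = integral\<^sup>L lborel h\<close> show ?thesis by simp
  qed
qed



lemma cnj_meas:
  fixes f :: "'a \<Rightarrow> complex"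
  assumes "f \<in> borel_measurable M" shows "(\<lambda>x. cnj (f x)) \<in> borel_measurable M"
proof -
  have "(cnj :: complex \<Rightarrow> complex) \<in> borel_measurable borel"
    by (intro borel_measurable_continuous_onI continuous_intros)
  from measurable_compose[OF assms this] show ?thesis .
qed

lemma lin_moments:
  fixes z :: "'a \<Rightarrow> complex^'n" and w v :: "'n \<Rightarrow> complex"
  assumes zsq: "\<And>a. integrable M (\<lambda>\<omega>. (cmod (z \<omega> $ a))\<^sup>2)"
    and zm: "\<And>a. (\<lambda>\<omega>. z \<omega> $ a) \<in> borel_measurable M"
    and Ezc: "\<And>a b. integral\<^sup>L M (\<lambda>\<omega>. z \<omega> $ a * cnj (z \<omega> $ b)) = C $ a $ b"
    and Ez0: "\<And>a b. integral\<^sup>L M (\<lambda>\<omega>. z \<omega> $ a * z \<omega> $ b) = 0"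
  shows "integrable M (\<lambda>\<omega>. (\<Sum>a\<in>UNIV. w a * z \<omega> $ a) * cnj (\<Sum>b\<in>UNIV. v b * z \<omega> $ b))"
    and "integral\<^sup>L M (\<lambda>\<omega>. (\<Sum>a\<in>UNIV. w a * z \<omega> $ a) * cnj (\<Sum>b\<in>UNIV. v b * z \<omega> $ b))
         = (\<Sum>a\<in>UNIV. \<Sum>b\<in>UNIV. w a * cnj (v b) * C $ a $ b)"
    and "integrable M (\<lambda>\<omega>. (\<Sum>a\<in>UNIV. w a * z \<omega> $ a) * (\<Sum>b\<in>UNIV. v b * z \<omega> $ b))"
    and "integral\<^sup>L M (\<lambda>\<omega>. (\<Sum>a\<in>UNIV. w a * z \<omega> $ a) * (\<Sum>b\<in>UNIV. v b * z \<omega> $ b)) = 0"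
proof -
  have zcm: "(\<lambda>\<omega>. cnj (z \<omega> $ a)) \<in> borel_measurable M" for a using cnj_meas[OF zm[of a]] .
  have zcsq: "integrable M (\<lambda>\<omega>. (cmod (cnj (z \<omega> $ a)))\<^sup>2)" for a using zsq[of a] by simp
  have i1: "integrable M (\<lambda>\<omega>. z \<omega> $ a * cnj (z \<omega> $ b))" for a b
    by (rule int_prod[OF zsq zcsq zm zcm])
  have i2: "integrable M (\<lambda>\<omega>. z \<omega> $ a * z \<omega> $ b)" for a b
    by (rule int_prod[OF zsq zsq zm zm])
  have e1: "(\<lambda>\<omega>. (\<Sum>a\<in>UNIV. w a * z \<omega> $ a) * cnj (\<Sum>b\<in>UNIV. v b * z \<omega> $ b))
     = (\<lambda>\<omega>. \<Sum>a\<in>UNIV. \<Sum>b\<in>UNIV. (w a * cnj (v b)) * (z \<omega> $ a * cnj (z \<omega> $ b)))"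
    by (simp add: sum_distrib_left sum_distrib_right ac_simps) (rule ext, rule sum.swap)
  have e2: "(\<lambda>\<omega>. (\<Sum>a\<in>UNIV. w a * z \<omega> $ a) * (\<Sum>b\<in>UNIV. v b * z \<omega> $ b))
     = (\<lambda>\<omega>. \<Sum>a\<in>UNIV. \<Sum>b\<in>UNIV. (w a * v b) * (z \<omega> $ a * z \<omega> $ b))"
    by (simp add: sum_distrib_left sum_distrib_right ac_simps)
  show "integrable M (\<lambda>\<omega>. (\<Sum>a\<in>UNIV. w a * z \<omega> $ a) * cnj (\<Sum>b\<in>UNIV. v b * z \<omega> $ b))"
    unfolding e1 by (intro Bochner_Integration.integrable_sum Bochner_Integration.integrable_mult_right i1)
  show "integrable M (\<lambda>\<omega>. (\<Sum>a\<in>UNIV. w a * z \<omega> $ a) * (\<Sum>b\<in>UNIV. v b * z \<omega> $ b))"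
    unfolding e2 by (intro Bochner_Integration.integrable_sum Bochner_Integration.integrable_mult_right i2)
  show "integral\<^sup>L M (\<lambda>\<omega>. (\<Sum>a\<in>UNIV. w a * z \<omega> $ a) * cnj (\<Sum>b\<in>UNIV. v b * z \<omega> $ b))
         = (\<Sum>a\<in>UNIV. \<Sum>b\<in>UNIV. w a * cnj (v b) * C $ a $ b)"
    unfolding e1 using i1
    by (subst Bochner_Integration.integral_sum,
        intro Bochner_Integration.integrable_sum Bochner_Integration.integrable_mult_right i1,
        subst Bochner_Integration.integral_sum,
        intro Bochner_Integration.integrable_mult_right i1) (simp add: Ezc)
  show "integral\<^sup>L M (\<lambda>\<omega>. (\<Sum>a\<in>UNIV. w a * z \<omega> $ a) * (\<Sum>b\<in>UNIV. v b * z \<omega> $ b)) = 0"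
    unfolding e2 using i2
    by (subst Bochner_Integration.integral_sum,
        intro Bochner_Integration.integrable_sum Bochner_Integration.integrable_mult_right i2,
        subst Bochner_Integration.integral_sum,
        intro Bochner_Integration.integrable_mult_right i2) (simp add: Ez0)
qed



lemma sum_if_out: "(\<Sum>b\<in>A. if P then f b else 0) = (if P then sum f A else 0)"
  by simp

theorem mainTheorem2:
  fixes M :: "'a measure"
    and s :: "'a \<Rightarrow> complex"
    and z :: "'a \<Rightarrow> complex^'n"
    and ps :: "complex \<Rightarrow> real"
    and C :: "complex^'n^'n"
    and g0 :: "complex^'n"
    and N :: nat
  assumes prob: "prob_space M"
    and s_dens: "distributed M lborel s (\<lambda>u. ennreal (ps u))"
    and ps_pos: "\<forall>u. ps u > 0"
    and ps_diff: "\<forall>u. ps differentiable (at u)"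
    and reg: "integrable lborel (\<lambda>u. wirt_conj (\<lambda>u. complex_of_real (ps u) * cnj u) u)"
             "integral\<^sup>L lborel (\<lambda>u. wirt_conj (\<lambda>u. complex_of_real (ps u) * cnj u) u) = 0"
    and s_sq: "integrable M (\<lambda>\<omega>. (cmod (s \<omega>))\<^sup>2)"
    and s_mean: "integral\<^sup>L M s = 0"
    and psi_sq: "integrable M (\<lambda>\<omega>. (cmod (psi ps (s \<omega>)))\<^sup>2)"
    and C_pd: "herm_pd C"
    and z_gauss: "distributed M lborel z (\<lambda>y. ennreal (cgauss_pdf C y))"
    and C_cov: "C = (\<chi> i j. integral\<^sup>L M (\<lambda>\<omega>. z \<omega> $ i * cnj (z \<omega> $ j)))"
    and indep: "\<forall>A\<in>sets (borel :: complex measure). \<forall>B\<in>sets (borel :: (complex^'n) measure).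
        measure M ({\<omega>\<in>space M. s \<omega> \<in> A \<and> z \<omega> \<in> B}) =
        measure M ({\<omega>\<in>space M. s \<omega> \<in> A}) * measure M ({\<omega>\<in>space M. z \<omega> \<in> B})"
    and N_pos: "N > 0"
    and kappa_gt: "integral\<^sup>L M (\<lambda>\<omega>. (cmod (s \<omega>))\<^sup>2) * integral\<^sup>L M (\<lambda>\<omega>. (cmod (psi ps (s \<omega>)))\<^sup>2) > 1"
  shows "let \<sigma>2 = integral\<^sup>L M (\<lambda>\<omega>. (cmod (s \<omega>))\<^sup>2);
             \<kappa> = integral\<^sup>L M (\<lambda>\<omega>. (cmod (psi ps (s \<omega>)))\<^sup>2);
             t0 = theta 0 g0;
             X = (\<lambda>\<omega>. mixA 0 g0 (s \<omega>) (z \<omega>));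
             J = cfim TYPE('n + 'n) (fisherF M ps (cgauss_pdf C) t0 X) (fisherP M ps (cgauss_pdf C) t0 X);
             CR = crlb_h N J
         in CR = (\<chi> i j. complex_of_real (1 / real N * (\<sigma>2 / (\<kappa> * \<sigma>2 - 1))) * matrix_inv C $ i $ j)
          \<and> trace (C ** CR) / complex_of_real \<sigma>2
              = complex_of_real (1 / real N * (real CARD('n) / (\<sigma>2 * \<kappa> - 1)))"
proof -
  interpret prob_space M by (rule prob)
  define \<sigma>2 where "\<sigma>2 = integral\<^sup>L M (\<lambda>\<omega>. (cmod (s \<omega>))\<^sup>2)"
  define \<kappa> where "\<kappa> = integral\<^sup>L M (\<lambda>\<omega>. (cmod (psi ps (s \<omega>)))\<^sup>2)"
  define Q where "Q = matrix_inv C"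
  have KK: "pi ^ CARD('n) * Re (det C) > 0" by (rule z_facts(1)[OF prob z_gauss C_pd C_cov])
  have zsq: "\<And>a. integrable M (\<lambda>\<omega>. (cmod (z \<omega> $ a))\<^sup>2)" by (rule z_facts(2)[OF prob z_gauss C_pd C_cov])
  have Ez0: "\<And>a b. integral\<^sup>L M (\<lambda>\<omega>. z \<omega> $ a * z \<omega> $ b) = 0" by (rule z_facts(3)[OF prob z_gauss C_pd C_cov])
  have Ezc: "integral\<^sup>L M (\<lambda>\<omega>. z \<omega> $ a * cnj (z \<omega> $ b)) = C $ a $ b" for a b
    using arg_cong[OF C_cov, of "\<lambda>X. X $ a $ b"] by simp
  note HF = herm_pd_facts[OF C_pd]
  have CQ: "C ** Q = mat 1" using HF(1) by (simp add: Q_def)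
  have QC: "Q ** C = mat 1" using HF(2) by (simp add: Q_def)
  have hermQ: "Q $ i $ j = cnj (Q $ j $ i)" for i j using HF(3) unfolding Q_def by blast
  have cq: "(\<Sum>m\<in>UNIV. C$i$m * Q$m$j) = (if i = j then 1 else 0)" for i j
    using CQ by (simp add: matrix_matrix_mult_def mat_def vec_eq_iff)
  have qc: "(\<Sum>m\<in>UNIV. Q$i$m * C$m$j) = (if i = j then 1 else 0)" for i j
    using QC by (simp add: matrix_matrix_mult_def mat_def vec_eq_iff)
  have zm: "z \<in> borel_measurable M" using distributed_measurable[OF z_gauss] by simp
  have "(\<lambda>v::complex^'n. v$a) \<in> borel_measurable borel" for a
    by (intro borel_measurable_continuous_onI continuous_intros)
  from measurable_compose[OF zm this]
  have zam: "(\<lambda>\<omega>. z \<omega> $ a) \<in> borel_measurable M" for a .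
  have sm: "s \<in> borel_measurable M" using distributed_measurable[OF s_dens] by simp
  have pm: "psi ps \<in> borel_measurable borel" by (rule psi_meas[OF ps_pos ps_diff reg(1)])
  have Es1: "integral\<^sup>L M (\<lambda>\<omega>. cnj (s \<omega>) * psi ps (s \<omega>)) = 1"
    by (rule s_psi_moment[OF prob s_dens ps_pos ps_diff reg])
  define fs :: "'n + 'n \<Rightarrow> complex \<Rightarrow> complex"
    where "fs i u = (case i of Inl _ \<Rightarrow> cnj (psi ps u) | Inr _ \<Rightarrow> - cnj u)" for i u
  define Wt :: "'n + 'n \<Rightarrow> 'n \<Rightarrow> complex"
    where "Wt i m = (case i of Inl k \<Rightarrow> (if m = k then 1 else 0) | Inr k \<Rightarrow> Q $ k $ m)" for i m
  define gz where "gz i y = (\<Sum>m\<in>UNIV. Wt i m * y $ m)" for i and y :: "complex^'n"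
  have grad: "wgrad (\<lambda>t. loglik ps (cgauss_pdf C) t (mixA 0 g0 (s \<omega>) (z \<omega>))) (theta 0 g0)
      = (\<chi> i. fs i (s \<omega>) * gz i (z \<omega>))" for \<omega>
  proof (subst vec_eq_iff, rule allI)
    fix i :: "'n + 'n"
    show "wgrad (\<lambda>t. loglik ps (cgauss_pdf C) t (mixA 0 g0 (s \<omega>) (z \<omega>))) (theta 0 g0) $ i
      = (\<chi> i. fs i (s \<omega>) * gz i (z \<omega>)) $ i"
    proof (cases i)
      case (Inl k)
      have e: "(\<lambda>m. (if m = k then 1 else 0) * z \<omega> $ m) = (\<lambda>m. if m = k then z \<omega> $ k else 0)" by auto
      have "gz i (z \<omega>) = z \<omega> $ k" unfolding gz_def Wt_def Inl sum.case e by simp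
      then show ?thesis using score_h[OF ps_pos ps_diff] Inl by (simp add: fs_def)
    next
      case (Inr k)
      have "gz i (z \<omega>) = (Q *v z \<omega>) $ k" unfolding gz_def Wt_def Inr by (simp add: matrix_vector_mult_def)
      then show ?thesis using score_g[OF ps_pos KK HF(3)] Inr by (simp add: fs_def Q_def)
    qed
  qed
  have fsm: "fs i \<in> borel_measurable borel" for i
  proof (cases i)
    case (Inl k)
    have "fs i = (\<lambda>u. cnj (psi ps u))" by (rule ext) (simp add: fs_def Inl)
    then show ?thesis using cnj_meas[OF pm] by simp
  next
    case (Inr k)
    have "fs i = (\<lambda>u. - cnj u)" by (rule ext) (simp add: fs_def Inr)
    moreover have "(\<lambda>u. - cnj u :: complex) \<in> borel_measurable borel"
      by (intro borel_measurable_continuous_onI continuous_intros)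
    ultimately show ?thesis by simp
  qed
  have fscm: "(\<lambda>u. cnj (fs i u)) \<in> borel_measurable borel" for i by (rule cnj_meas[OF fsm])
  have fsq: "integrable M (\<lambda>\<omega>. (cmod (fs i (s \<omega>)))\<^sup>2)" for i
    by (cases i) (simp_all add: fs_def psi_sq s_sq)
  have fscq: "integrable M (\<lambda>\<omega>. (cmod (cnj (fs i (s \<omega>))))\<^sup>2)" for i
    using fsq[of i] by simp
  have fssm: "(\<lambda>\<omega>. fs i (s \<omega>)) \<in> borel_measurable M" for i using measurable_compose[OF sm fsm] .
  have fsscm: "(\<lambda>\<omega>. cnj (fs i (s \<omega>))) \<in> borel_measurable M" for i using measurable_compose[OF sm fscm] .
  have If1: "integrable M (\<lambda>\<omega>. fs i (s \<omega>) * cnj (fs j (s \<omega>)))" for i j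
    by (rule int_prod[OF fsq fscq fssm fsscm])
  have If2: "integrable M (\<lambda>\<omega>. fs i (s \<omega>) * fs j (s \<omega>))" for i j
    by (rule int_prod[OF fsq fsq fssm fssm])
  have Ig1: "integrable M (\<lambda>\<omega>. gz i (z \<omega>) * cnj (gz j (z \<omega>)))" for i j
    unfolding gz_def by (rule lin_moments(1)[OF zsq zam Ezc Ez0])
  have Ig2: "integrable M (\<lambda>\<omega>. gz i (z \<omega>) * gz j (z \<omega>))" for i j
    unfolding gz_def by (rule lin_moments(3)[OF zsq zam Ezc Ez0])
  have Eg1: "integral\<^sup>L M (\<lambda>\<omega>. gz i (z \<omega>) * cnj (gz j (z \<omega>))) = (\<Sum>a\<in>UNIV. \<Sum>b\<in>UNIV. Wt i a * cnj (Wt j b) * C $ a $ b)" for i j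
    unfolding gz_def by (rule lin_moments(2)[OF zsq zam Ezc Ez0])
  have Eg2: "integral\<^sup>L M (\<lambda>\<omega>. gz i (z \<omega>) * gz j (z \<omega>)) = 0" for i j
    unfolding gz_def by (rule lin_moments(4)[OF zsq zam Ezc Ez0])
  have gm1: "(\<lambda>y. gz i y * cnj (gz j y)) \<in> borel_measurable borel" for i j
    unfolding gz_def by (intro borel_measurable_continuous_onI continuous_intros)
  have gm2: "(\<lambda>y. gz i y * gz j y) \<in> borel_measurable borel" for i j
    unfolding gz_def by (intro borel_measurable_continuous_onI continuous_intros)
  have fm1: "(\<lambda>u. fs i u * cnj (fs j u)) \<in> borel_measurable borel" for i j
    using fsm fscm by (rule borel_measurable_times)
  have fm2: "(\<lambda>u. fs i u * fs j u) \<in> borel_measurable borel" for i j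
    using fsm fsm by (rule borel_measurable_times)
  have prod1: "integral\<^sup>L M (\<lambda>\<omega>. fs i (s \<omega>) * gz i (z \<omega>) * cnj (fs j (s \<omega>) * gz j (z \<omega>)))
     = integral\<^sup>L M (\<lambda>\<omega>. fs i (s \<omega>) * cnj (fs j (s \<omega>))) * integral\<^sup>L M (\<lambda>\<omega>. gz i (z \<omega>) * cnj (gz j (z \<omega>)))" for i j
  proof -
    have "integral\<^sup>L M (\<lambda>\<omega>. fs i (s \<omega>) * gz i (z \<omega>) * cnj (fs j (s \<omega>) * gz j (z \<omega>)))
      = integral\<^sup>L M (\<lambda>\<omega>. (fs i (s \<omega>) * cnj (fs j (s \<omega>))) * (gz i (z \<omega>) * cnj (gz j (z \<omega>))))"
      by (rule Bochner_Integration.integral_cong[OF refl]) (simp add: ac_simps)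
    also have "\<dots> = integral\<^sup>L M (\<lambda>\<omega>. fs i (s \<omega>) * cnj (fs j (s \<omega>))) * integral\<^sup>L M (\<lambda>\<omega>. gz i (z \<omega>) * cnj (gz j (z \<omega>)))"
      by (rule indep_prod[OF sm zm fm1 gm1 indep If1 Ig1])
    finally show ?thesis .
  qed
  have prod2: "integral\<^sup>L M (\<lambda>\<omega>. fs i (s \<omega>) * gz i (z \<omega>) * (fs j (s \<omega>) * gz j (z \<omega>))) = 0" for i j
  proof -
    have "integral\<^sup>L M (\<lambda>\<omega>. fs i (s \<omega>) * gz i (z \<omega>) * (fs j (s \<omega>) * gz j (z \<omega>)))
      = integral\<^sup>L M (\<lambda>\<omega>. (fs i (s \<omega>) * fs j (s \<omega>)) * (gz i (z \<omega>) * gz j (z \<omega>)))"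
      by (rule Bochner_Integration.integral_cong[OF refl]) (simp add: ac_simps)
    also have "\<dots> = integral\<^sup>L M (\<lambda>\<omega>. fs i (s \<omega>) * fs j (s \<omega>)) * integral\<^sup>L M (\<lambda>\<omega>. gz i (z \<omega>) * gz j (z \<omega>))"
      by (rule indep_prod[OF sm zm fm2 gm2 indep If2 Ig2])
    finally show ?thesis using Eg2 by simp
  qed
  have EsP: "integral\<^sup>L M (\<lambda>\<omega>. cnj (psi ps (s \<omega>)) * cnj (cnj (psi ps (s \<omega>)))) = of_real \<kappa>"
  proof -
    have "(\<lambda>\<omega>. cnj (psi ps (s \<omega>)) * cnj (cnj (psi ps (s \<omega>)))) = (\<lambda>\<omega>. complex_of_real ((cmod (psi ps (s \<omega>)))\<^sup>2))"
    proof (rule ext)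
      fix \<omega>
      have "cnj (psi ps (s \<omega>)) * cnj (cnj (psi ps (s \<omega>))) = psi ps (s \<omega>) * cnj (psi ps (s \<omega>))"
        by (simp add: mult.commute)
      also have "\<dots> = complex_of_real ((cmod (psi ps (s \<omega>)))\<^sup>2)" by (rule complex_norm_square[symmetric])
      finally show "cnj (psi ps (s \<omega>)) * cnj (cnj (psi ps (s \<omega>))) = complex_of_real ((cmod (psi ps (s \<omega>)))\<^sup>2)" .
    qed
    then show ?thesis unfolding \<kappa>_def by (simp only: integral_complex_of_real)
  qed
  have EsS: "integral\<^sup>L M (\<lambda>\<omega>. - cnj (s \<omega>) * cnj (- cnj (s \<omega>))) = of_real \<sigma>2"
  proof -
    have "(\<lambda>\<omega>. - cnj (s \<omega>) * cnj (- cnj (s \<omega>))) = (\<lambda>\<omega>. complex_of_real ((cmod (s \<omega>))\<^sup>2))"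
    proof (rule ext)
      fix \<omega>
      have "- cnj (s \<omega>) * cnj (- cnj (s \<omega>)) = s \<omega> * cnj (s \<omega>)"
        by (simp add: mult.commute)
      also have "\<dots> = complex_of_real ((cmod (s \<omega>))\<^sup>2)" by (rule complex_norm_square[symmetric])
      finally show "- cnj (s \<omega>) * cnj (- cnj (s \<omega>)) = complex_of_real ((cmod (s \<omega>))\<^sup>2)" .
    qed
    then show ?thesis unfolding \<sigma>2_def by (simp only: integral_complex_of_real)
  qed
  have Es1': "integral\<^sup>L M (\<lambda>\<omega>. s \<omega> * cnj (psi ps (s \<omega>))) = 1"
  proof -
    have "integral\<^sup>L M (\<lambda>\<omega>. cnj (cnj (s \<omega>) * psi ps (s \<omega>))) = cnj (integral\<^sup>L M (\<lambda>\<omega>. cnj (s \<omega>) * psi ps (s \<omega>)))"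
      by (rule Bochner_Integration.integral_cnj)
    then show ?thesis using Es1 by simp
  qed
  have EsPS: "integral\<^sup>L M (\<lambda>\<omega>. cnj (psi ps (s \<omega>)) * cnj (- cnj (s \<omega>))) = -1"
  proof -
    have "(\<lambda>\<omega>. cnj (psi ps (s \<omega>)) * cnj (- cnj (s \<omega>))) = (\<lambda>\<omega>. - (s \<omega> * cnj (psi ps (s \<omega>))))"
      by (rule ext) (simp add: mult.commute)
    then show ?thesis using Es1' by simp
  qed
  have EsSP: "integral\<^sup>L M (\<lambda>\<omega>. - cnj (s \<omega>) * cnj (cnj (psi ps (s \<omega>)))) = -1"
  proof -
    have "(\<lambda>\<omega>. - cnj (s \<omega>) * cnj (cnj (psi ps (s \<omega>)))) = (\<lambda>\<omega>. - (cnj (s \<omega>) * psi ps (s \<omega>)))"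
      by (rule ext) simp
    then show ?thesis using Es1 by simp
  qed
  define Fm :: "complex^('n+'n)^('n+'n)" where
    "Fm = (\<chi> \<alpha> \<beta>. blk (\<lambda>i j. of_real \<kappa> * C$i$j) (\<lambda>i j. - (if i = j then 1 else 0))
                     (\<lambda>i j. - (if i = j then 1 else 0)) (\<lambda>i j. of_real \<sigma>2 * Q$i$j) \<alpha> \<beta>)"
  have Gc11: "(\<Sum>a\<in>UNIV. \<Sum>b\<in>UNIV. (if a = k then 1 else 0) * cnj (if b = l then 1 else 0) * C$a$b) = C$k$l" for k l
    by (simp add: if_zero_mult mult_if_zero sum_if_out if_distrib[where f=cnj] cong: if_cong)
  have Gc12: "(\<Sum>a\<in>UNIV. \<Sum>b\<in>UNIV. (if a = k then 1 else 0) * cnj (Q$l$b) * C$a$b) = (if k = l then 1 else 0)" for k l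
  proof -
    have "(\<Sum>a\<in>UNIV. \<Sum>b\<in>UNIV. (if a = k then 1 else 0) * cnj (Q$l$b) * C$a$b) = (\<Sum>b\<in>UNIV. cnj (Q$l$b) * C$k$b)"
      by (simp add: if_zero_mult sum_if_out cong: if_cong)
    also have "\<dots> = (\<Sum>b\<in>UNIV. C$k$b * Q$b$l)"
      by (rule sum.cong[OF refl]) (simp add: hermQ[of _ l] mult.commute)
    finally show ?thesis using cq by simp
  qed
  have Gc21: "(\<Sum>a\<in>UNIV. \<Sum>b\<in>UNIV. Q$k$a * cnj (if b = l then 1 else 0) * C$a$b) = (if k = l then 1 else 0)" for k l
  proof -
    have "(\<Sum>a\<in>UNIV. \<Sum>b\<in>UNIV. Q$k$a * cnj (if b = l then 1 else 0) * C$a$b) = (\<Sum>a\<in>UNIV. Q$k$a * C$a$l)"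
      by (simp add: if_zero_mult mult_if_zero sum_if_out if_distrib[where f=cnj] cong: if_cong)
    then show ?thesis using qc by simp
  qed
  have Gc22: "(\<Sum>a\<in>UNIV. \<Sum>b\<in>UNIV. Q$k$a * cnj (Q$l$b) * C$a$b) = Q$k$l" for k l
  proof -
    have "(\<Sum>a\<in>UNIV. \<Sum>b\<in>UNIV. Q$k$a * cnj (Q$l$b) * C$a$b) = (\<Sum>b\<in>UNIV. \<Sum>a\<in>UNIV. Q$k$a * cnj (Q$l$b) * C$a$b)"
      by (rule sum.swap)
    also have "\<dots> = (\<Sum>b\<in>UNIV. (\<Sum>a\<in>UNIV. Q$k$a * C$a$b) * cnj (Q$l$b))"
      by (simp add: sum_distrib_left sum_distrib_right ac_simps)
    also have "\<dots> = (\<Sum>b\<in>UNIV. (if k = b then cnj (Q$l$b) else 0))"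
      by (simp add: qc if_zero_mult)
    also have "\<dots> = cnj (Q$l$k)" by simp
    also have "\<dots> = Q$k$l" using hermQ[of k l] by simp
    finally show ?thesis .
  qed
  have FF: "fisherF M ps (cgauss_pdf C) (theta 0 g0) (\<lambda>\<omega>. mixA 0 g0 (s \<omega>) (z \<omega>)) = Fm"
  proof -
    have ent: "integral\<^sup>L M (\<lambda>\<omega>. fs i (s \<omega>) * cnj (fs j (s \<omega>))) * (\<Sum>a\<in>UNIV. \<Sum>b\<in>UNIV. Wt i a * cnj (Wt j b) * C $ a $ b)
       = Fm $ i $ j" for i j
    proof (cases i; cases j)
      fix k l assume ij: "i = Inl k" "j = Inl l"
      show ?thesis unfolding ij fs_def Wt_def sum.case EsP Gc11 Fm_def by simp
    next
      fix k l assume ij: "i = Inl k" "j = Inr l"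
      show ?thesis unfolding ij fs_def Wt_def sum.case EsPS Gc12 Fm_def by simp
    next
      fix k l assume ij: "i = Inr k" "j = Inl l"
      show ?thesis unfolding ij fs_def Wt_def sum.case EsSP Gc21 Fm_def by simp
    next
      fix k l assume ij: "i = Inr k" "j = Inr l"
      show ?thesis unfolding ij fs_def Wt_def sum.case EsS Gc22 Fm_def by simp
    qed
    show ?thesis
      unfolding fisherF_def grad vec_lambda_beta prod1 Eg1
      by (subst vec_eq_iff, intro allI, subst vec_lambda_beta, subst vec_eq_iff, intro allI,
          subst vec_lambda_beta, rule ent)
  qed
  have PP: "fisherP M ps (cgauss_pdf C) (theta 0 g0) (\<lambda>\<omega>. mixA 0 g0 (s \<omega>) (z \<omega>)) = 0"
    unfolding fisherP_def grad by (simp add: vec_eq_iff prod2)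
  have gt: "\<sigma>2 * \<kappa> > 1" using kappa_gt unfolding \<sigma>2_def \<kappa>_def .
  then have d: "\<sigma>2 * \<kappa> \<noteq> 1" by simp
  have \<sigma>nz: "\<sigma>2 \<noteq> 0" using gt by (metis mult_zero_left not_one_less_zero)
  have d2: "\<kappa> * \<sigma>2 - 1 \<noteq> 0" using d by (simp add: mult.commute)
  note BI = big_inv[OF block_inv[OF CQ QC d] N_pos]
  define c0 where "c0 = complex_of_real (1 / real N * (\<sigma>2 / (\<kappa> * \<sigma>2 - 1)))"
  have sc: "complex_of_real (\<sigma>2 / (\<sigma>2 * \<kappa> - 1)) * q / of_nat N = c0 * q" for q
  proof -
    have "\<sigma>2 * \<kappa> = \<kappa> * \<sigma>2" by simp
    then show ?thesis unfolding c0_def by (simp add: of_real_mult of_real_divide)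
  qed
  have CR: "crlb_h N (cfim TYPE('n + 'n) Fm 0) = (\<chi> i j. c0 * Q $ i $ j)"
    unfolding crlb_h_def Fm_def BI vec_lambda_beta blk_simps sc ..
  have diag: "(C ** (\<chi> i j. c0 * Q $ i $ j)) $ i $ i = c0" for i
  proof -
    have "(C ** (\<chi> i j. c0 * Q $ i $ j)) $ i $ i = (\<Sum>m\<in>UNIV. C$i$m * (c0 * Q$m$i))"
      by (simp add: matrix_matrix_mult_def)
    also have "\<dots> = c0 * (\<Sum>m\<in>UNIV. C$i$m * Q$m$i)"
      by (simp add: sum_distrib_left ac_simps)
    also have "\<dots> = c0" using cq[of i i] by simp
    finally show ?thesis .
  qed
  have TRc: "trace (C ** (\<chi> i j. c0 * Q $ i $ j)) = of_nat CARD('n) * c0"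
    unfolding trace_def diag by simp
  have r: "(1 / real N * (\<sigma>2 / (\<kappa> * \<sigma>2 - 1))) * real CARD('n) / \<sigma>2
      = 1 / real N * (real CARD('n) / (\<sigma>2 * \<kappa> - 1))"
    using \<sigma>nz d2 by (simp add: divide_simps mult.commute)
  have TR: "trace (C ** (\<chi> i j. c0 * Q $ i $ j)) / complex_of_real \<sigma>2
      = complex_of_real (1 / real N * (real CARD('n) / (\<sigma>2 * \<kappa> - 1)))"
  proof -
    have "trace (C ** (\<chi> i j. c0 * Q $ i $ j)) / complex_of_real \<sigma>2
        = complex_of_real ((1 / real N * (\<sigma>2 / (\<kappa> * \<sigma>2 - 1))) * real CARD('n) / \<sigma>2)"
      by (subst TRc) (simp add: c0_def of_real_mult of_real_divide mult.commute)
    then show ?thesis unfolding r .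
  qed
  show ?thesis
    unfolding Let_def \<sigma>2_def[symmetric] \<kappa>_def[symmetric] FF PP CR Q_def[symmetric] c0_def[symmetric]
    using TR by blast
qed


end
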